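(* Assume that a Sierpiński set exists. Then there exists a set $A\subseteq\mathbb{R}^2$ such that for every straight line $l\subseteq\mathbb{R}^2$ and every isometry $T:\mathbb{R}\to l$ onto $l$, the set $T^{-1}(A\cap l)$ is a strong Sierpiński subset of $\mathbb{R}$.
   Context: A Sierpiński set is $S\subseteq\mathbb{R}$ with $|S|=\mathfrak{c}$ such that $S\cap N$ is countable for every Lebesgue-null $N\subseteq\mathbb{R}$; it is strong Sierpiński if moreover $S\cap B$ is uncountable for every Borel $B\subseteq\mathbb{R}$ of positive Lebesgue measure. *)

theory Defs
  imports "HOL-Analysis.Analysis" "HOL-Library.Equipollence"
begin

definition sierpinski :: "real set \<Rightarrow> bool" where
  "sierpinski S \<longleftrightarrow> S \<approx> (UNIV :: real set) \<and>
     (\<forall>N \<in> null_sets lebesgue. countable (S \<inter> N))"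

definition strong_sierpinski :: "real set \<Rightarrow> bool" where
  "strong_sierpinski S \<longleftrightarrow> sierpinski S \<and>
     (\<forall>B \<in> sets borel. emeasure lborel B > 0 \<longrightarrow> uncountable (S \<inter> B))"

definition is_line :: "(real^2) set \<Rightarrow> bool" where
  "is_line l \<longleftrightarrow> (\<exists>a v. v \<noteq> 0 \<and> l = {a + t *\<^sub>R v | t. True})"

end

theory Submission
  imports Defs
begin

lemma density_lower:
  fixes C :: "real set"
  assumes C: "C \<in> sets lebesgue" and nn: "\<not> negligible C"
  obtains y r0 e0 where "r0>0" "e0>0"
    "\<And>d. 0<d \<Longrightarrow> d \<le> r0 \<Longrightarrow> e0 * (2*d) \<le> measure lebesgue (C \<inter> ball y d)"
proof -
  have "\<not>(\<forall>x\<in>C. \<forall>r>0. \<forall>e>0. \<exists>d. 0 < d \<and> d \<le> r \<and> (\<exists>U. C \<inter> ball x d \<subseteq> U \<and> U \<in> lmeasurable \<and> measure lebesgue U < e * measure lebesgue (ball x d)))"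
    using nn negligible_eq_zero_density[of C] by simp
  then obtain y where "y \<in> C" and "\<not>(\<forall>r>0. \<forall>e>0. \<exists>d. 0 < d \<and> d \<le> r \<and> (\<exists>U. C \<inter> ball y d \<subseteq> U \<and> U \<in> lmeasurable \<and> measure lebesgue U < e * measure lebesgue (ball y d)))"
    by blast
  then obtain r0 where "r0 > 0" and "\<not>(\<forall>e>0. \<exists>d. 0 < d \<and> d \<le> r0 \<and> (\<exists>U. C \<inter> ball y d \<subseteq> U \<and> U \<in> lmeasurable \<and> measure lebesgue U < e * measure lebesgue (ball y d)))"
    by (meson)
  then obtain e0 where "e0 > 0" and H0: "\<not>(\<exists>d. 0 < d \<and> d \<le> r0 \<and> (\<exists>U. C \<inter> ball y d \<subseteq> U \<and> U \<in> lmeasurable \<and> measure lebesgue U < e0 * measure lebesgue (ball y d)))"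
    by (meson)
  have H: "\<And>d. 0<d \<Longrightarrow> d \<le> r0 \<Longrightarrow> \<not>(\<exists>U. C \<inter> ball y d \<subseteq> U \<and> U \<in> lmeasurable \<and> measure lebesgue U < e0 * measure lebesgue (ball y d))"
    using H0 by blast
  show thesis
  proof (rule that[of r0 e0 y])
    fix d :: real assume d: "0<d" "d\<le>r0"
    have L: "C \<inter> ball y d \<in> lmeasurable"
      by (intro bounded_set_imp_lmeasurable) (simp_all add: bounded_Int sets.Int[OF C fmeasurableD[OF lmeasurable_ball]])
    have "\<not> measure lebesgue (C \<inter> ball y d) < e0 * measure lebesgue (ball y d)"
      using H[OF d] L by blast
    then show "e0*(2*d) \<le> measure lebesgue (C \<inter> ball y d)"
      using d by (simp add: ball_eq_greaterThanLessThan not_less)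
  qed (use \<open>r0>0\<close> \<open>e0>0\<close> in auto)
qed
lemma lmeas_Int_ball: "(C::real set) \<in> sets lebesgue \<Longrightarrow> C \<inter> ball x d \<in> lmeasurable"
  by (intro bounded_set_imp_lmeasurable) (simp_all add: bounded_Int sets.Int[OF _ fmeasurableD[OF lmeasurable_ball]])

lemma ergodic:
  fixes C :: "real set"
  assumes C: "C \<in> sets lebesgue" and inv: "\<And>x q. q \<in> \<rat> \<Longrightarrow> x \<in> C \<Longrightarrow> x + q \<in> C"
    and nn: "\<not> negligible C"
  shows "negligible (-C)"
proof -
  obtain r0 e0 y where r0: "r0>0" and e0: "e0>0"
    and low: "\<And>d. 0<d \<Longrightarrow> d\<le>r0 \<Longrightarrow> e0*(2*d) \<le> measure lebesgue (C\<inter>ball y d)"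
    by (rule density_lower[OF C nn]) (rule that, assumption+)
  have lmC: "C \<inter> ball x d \<in> lmeasurable" for x d
    by (rule lmeas_Int_ball[OF C])
  have low2: "e0 * d \<le> measure lebesgue (C \<inter> ball x d)" if "0<d" "d\<le>r0" for x d
  proof -
    obtain q where q: "q\<in>\<rat>" "x - y - d/2 < q" "q < x - y + d/2"
      using Rats_dense_in_real[of "x-y-d/2" "x-y+d/2"] \<open>0<d\<close> by auto
    have eq: "C \<inter> ball (y+q) (d/2) = (+) q ` (C \<inter> ball y (d/2))"
    proof
      show "C \<inter> ball (y+q) (d/2) \<subseteq> (+) q ` (C \<inter> ball y (d/2))"
      proof
        fix z assume z: "z \<in> C \<inter> ball (y+q) (d/2)"
        have "-q \<in> \<rat>" using q by simp
        then have "z + -q \<in> C" using inv z by blast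
        moreover have "z + -q \<in> ball y (d/2)" using z by (auto simp: dist_real_def diff_diff_eq2)
        ultimately show "z \<in> (+) q ` (C \<inter> ball y (d/2))" by (auto intro!: image_eqI[of _ _ "z + -q"])
      qed
      show "(+) q ` (C \<inter> ball y (d/2)) \<subseteq> C \<inter> ball (y+q) (d/2)"
      proof (rule subsetI, elim imageE)
        fix z w assume zw: "z = q + w" "w \<in> C \<inter> ball y (d/2)"
        have "w + q \<in> C" using inv[OF q(1), of w] zw by blast
        then have "z \<in> C" using zw by (simp add: add.commute)
        moreover have "z \<in> ball (y+q) (d/2)" using zw by (auto simp: dist_real_def)
        ultimately show "z \<in> C \<inter> ball (y+q) (d/2)" by blast
      qed
    qed
    have sub: "C \<inter> ball (y+q) (d/2) \<subseteq> C \<inter> ball x d"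
    proof
      fix z assume z: "z \<in> C \<inter> ball (y+q) (d/2)"
      then have "z \<in> C" and "- (d/2) < y+q-z \<and> y+q-z < d/2"
        unfolding Int_iff mem_ball dist_real_def abs_less_iff by auto
      moreover have "x-z < d \<and> - (x-z) < d" using q calculation(2) by linarith
      ultimately show "z \<in> C \<inter> ball x d" unfolding Int_iff mem_ball dist_real_def abs_less_iff by blast
    qed
    have "e0 * d = e0 * (2*(d/2))" by simp
    also have "\<dots> \<le> measure lebesgue (C \<inter> ball y (d/2))" using low[of "d/2"] that by simp
    also have "\<dots> = measure lebesgue (C \<inter> ball (y+q) (d/2))" by (simp add: eq measure_translation)
    also have "\<dots> \<le> measure lebesgue (C \<inter> ball x d)"
      by (rule measure_mono_fmeasurable[OF sub fmeasurableD[OF lmC] lmC])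
    finally show ?thesis .
  qed
  define a where "a = min (e0/2) (1/2)"
  have a: "0 < a" "a \<le> 1/2" "a \<le> e0/2" using e0 by (auto simp: a_def)
  have up: "measure lebesgue (-C \<inter> ball x d) \<le> (1-a) * (2*d)" if "0<d" "d\<le>r0" for x d
  proof -
    have "-C \<inter> ball x d = ball x d - (C \<inter> ball x d)" by auto
    then have "measure lebesgue (-C \<inter> ball x d) = measure lebesgue (ball x d) - measure lebesgue (C \<inter> ball x d)"
      using lmC[of x d] by (simp add: measure_Diff fmeasurableD emeasure_eq_measure2 ball_eq_greaterThanLessThan)
    also have "\<dots> = 2*d - measure lebesgue (C \<inter> ball x d)" using that by (simp add: ball_eq_greaterThanLessThan)
    finally have eq1: "measure lebesgue (-C \<inter> ball x d) = 2*d - measure lebesgue (C \<inter> ball x d)" .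
    have "a*(2*d) \<le> (e0/2)*(2*d)" using mult_right_mono[of a "e0/2" "2*d"] a that by simp
    moreover have "(e0/2)*(2*d) = e0*d" by simp
    moreover have "(1-a)*(2*d) = 2*d - a*(2*d)" by (simp add: algebra_simps)
    ultimately show ?thesis using eq1 low2[OF that, of x] by linarith
  qed
  have negR: "negligible (-C \<inter> ball 0 R)" for R
  proof (rule ccontr)
    assume nR: "\<not> negligible (-C \<inter> ball 0 R)"
    define D where "D = -C \<inter> ball 0 R"
    have lmD: "D \<in> lmeasurable" unfolding D_def
      by (rule lmeas_Int_ball) (simp add: C Compl_in_sets_lebesgue)
    define m where "m = measure lebesgue D"
    have m: "m > 0" using nR lmD negligible_iff_measure0[OF lmD] unfolding m_def D_def
      by (metis measure_nonneg order_less_le)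
    obtain T where T: "open T" "D \<subseteq> T" "T - D \<in> lmeasurable" "emeasure lebesgue (T - D) < ennreal (a*m)"
      using sets_lebesgue_outer_open[of D "a*m"] lmD a m by (auto intro: fmeasurableD)
    have TU: "T = (T - D) \<union> D" using T by auto
    have lmT: "T \<in> lmeasurable" using T(3) lmD by (subst TU) (rule fmeasurable.Un)
    have mT: "measure lebesgue T < m + a*m"
    proof -
      have "measure lebesgue T \<le> measure lebesgue (T - D) + m"
        unfolding m_def by (subst TU) (rule measure_Un_le, use T lmD in auto)
      moreover have "measure lebesgue (T - D) < a*m"
        using T(3,4) a m by (simp add: emeasure_eq_measure2 ennreal_less_iff)
      ultimately show ?thesis by simp
    qed
    define K where "K = {(x,d). x \<in> D \<and> 0 < d \<and> d \<le> r0 \<and> ball x d \<subseteq> T}"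
    have cov: "\<exists>i. i \<in> K \<and> x \<in> ball (fst i) (snd i) \<and> snd i < d" if "x \<in> D" "0 < d" for x d
    proof -
      have "x \<in> T" using T(2) that by blast
      then obtain e where e: "e>0" "ball x e \<subseteq> T" using openE[OF T(1)] by metis
      show ?thesis
        by (rule exI[of _ "(x, min (d/2) (min e r0))"]) (use e that r0 in \<open>auto simp: K_def\<close>)
    qed
    obtain CC where CC: "countable CC" "CC \<subseteq> K"
      "pairwise (\<lambda>i j. disjnt (ball (fst i) (snd i)) (ball (fst j) (snd j))) CC"
      "negligible (D - (\<Union>i\<in>CC. ball (fst i) (snd i)))"
      by (rule Vitali_covering_theorem_balls[of D K fst snd, OF cov])
    define B where "B i = ball (fst i) (snd i)" for i :: "real \<times> real"
    have Bs: "\<And>i. B i \<in> sets lebesgue" unfolding B_def by (rule fmeasurableD[OF lmeasurable_ball])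
    have Ds: "D \<in> sets lebesgue" by (rule fmeasurableD[OF lmD])
    have DBs: "\<And>i. D \<inter> B i \<in> sets lebesgue" by (rule sets.Int[OF Ds Bs])
    have U1: "(\<Union>i\<in>CC. D \<inter> B i) \<in> sets lebesgue" by (rule sets.countable_UN''[OF CC(1) DBs])
    have U2: "(\<Union>i\<in>CC. B i) \<in> sets lebesgue" by (rule sets.countable_UN''[OF CC(1) Bs])
    have disj: "disjoint_family_on B CC" using CC(3)
      unfolding disjoint_family_on_def pairwise_def disjnt_def B_def by blast
    have disj2: "disjoint_family_on (\<lambda>i. D \<inter> B i) CC" using disj
      unfolding disjoint_family_on_def by blast
    have E0: "emeasure lebesgue (D - (\<Union>i\<in>CC. B i)) = 0"
      using CC(4) unfolding B_def negligible_iff_null_sets by (rule null_setsD1)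
    have E1: "emeasure lebesgue D \<le> emeasure lebesgue (\<Union>i\<in>CC. D \<inter> B i)"
    proof -
    have "emeasure lebesgue D \<le> emeasure lebesgue ((\<Union>i\<in>CC. D \<inter> B i) \<union> (D - (\<Union>i\<in>CC. B i)))"
      by (rule emeasure_mono, blast, intro sets.Un sets.Diff U1 Ds U2)
    also have "\<dots> \<le> emeasure lebesgue (\<Union>i\<in>CC. D \<inter> B i) + emeasure lebesgue (D - (\<Union>i\<in>CC. B i))"
      by (rule emeasure_subadditive[OF U1 sets.Diff[OF Ds U2]])
    finally show ?thesis using E0 by simp
    qed
    have E2: "emeasure lebesgue (\<Union>i\<in>CC. D \<inter> B i) \<le> ennreal (1-a) * emeasure lebesgue T"
    proof -
    have "emeasure lebesgue (\<Union>i\<in>CC. D \<inter> B i) = (\<integral>\<^sup>+i. emeasure lebesgue (D \<inter> B i) \<partial>count_space CC)"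
      by (rule emeasure_UN_countable[OF DBs CC(1) disj2])
    also have "\<dots> \<le> (\<integral>\<^sup>+i. ennreal (1-a) * emeasure lebesgue (B i) \<partial>count_space CC)"
    proof (rule nn_integral_mono)
      fix i assume "i \<in> space (count_space CC)"
      then have i: "i \<in> K" using CC by auto
      then obtain x d where xd: "i = (x,d)" "x \<in> D" "0<d" "d\<le>r0" unfolding K_def by auto
      have "emeasure lebesgue (D \<inter> B i) \<le> emeasure lebesgue (-C \<inter> ball x d)"
        by (rule emeasure_mono) (auto simp: xd B_def D_def intro: sets.Int[OF Compl_in_sets_lebesgue[THEN iffD2, OF C] fmeasurableD[OF lmeasurable_ball]])
      also have "\<dots> = ennreal (measure lebesgue (-C \<inter> ball x d))"
        by (rule emeasure_eq_measure2, rule lmeas_Int_ball) (simp add: C Compl_in_sets_lebesgue)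
      also have "\<dots> \<le> ennreal ((1-a)*(2*d))" using up[OF xd(3,4)] by (simp add: ennreal_leI)
      also have "\<dots> = ennreal (1-a) * emeasure lebesgue (B i)"
        using xd a by (simp add: B_def ball_eq_greaterThanLessThan ennreal_mult)
      finally show "emeasure lebesgue (D \<inter> B i) \<le> ennreal (1-a) * emeasure lebesgue (B i)" .
    qed
    also have "\<dots> = ennreal (1-a) * (\<integral>\<^sup>+i. emeasure lebesgue (B i) \<partial>count_space CC)"
      by (rule nn_integral_cmult) auto
    also have "\<dots> = ennreal (1-a) * emeasure lebesgue (\<Union>i\<in>CC. B i)"
      by (simp add: emeasure_UN_countable[OF Bs CC(1) disj])
    also have "\<dots> \<le> ennreal (1-a) * emeasure lebesgue T"
    proof (rule mult_left_mono[OF _ zero_le])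
      show "emeasure lebesgue (\<Union>i\<in>CC. B i) \<le> emeasure lebesgue T"
    proof (rule emeasure_mono[OF _ fmeasurableD[OF lmT]], rule UN_least)
      fix i assume "i \<in> CC" then have "i \<in> K" using CC(2) by blast
      then show "B i \<subseteq> T" unfolding K_def B_def by (cases i) auto
    qed
    qed
    finally show ?thesis .
    qed
    have "emeasure lebesgue D \<le> ennreal (1-a) * emeasure lebesgue T"
      using E1 E2 by (rule order_trans)
    then have "m \<le> (1-a) * measure lebesgue T"
      using lmD lmT a unfolding m_def
      by (simp add: emeasure_eq_measure2 ennreal_mult[symmetric] ennreal_le_iff)
    also have "\<dots> \<le> (1-a) * (m + a*m)" using mT a by (intro mult_left_mono) auto
    finally have "m \<le> m - a*a*m" by (simp add: algebra_simps)
    then show False using a m by (smt (verit) mult_pos_pos)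
  qed
  have "-C = (\<Union>n\<in>(UNIV::nat set). -C \<inter> ball 0 (real n))"
    by (auto simp: dist_real_def) (meson reals_Archimedean2)
  also have "negligible \<dots>"
    by (rule negligible_countable_Union) (use negR in auto)
  finally show ?thesis .
qed


lemma diffI: "(f has_real_derivative D) (at x within s) \<Longrightarrow> f differentiable (at x within s)"
  using real_differentiable_def by blast

lemma ln_diff_on: "(M::real set) \<subseteq> {0<..} \<Longrightarrow> ln differentiable_on M"
  unfolding differentiable_on_def
proof
  fix x assume "M \<subseteq> {0<..}" "x \<in> M" then have "x > 0" by auto
  then have "(ln has_real_derivative (1/x)) (at x within M)"
    by (auto intro!: derivative_eq_intros)
  then show "ln differentiable at x within M" by (rule diffI)
qed

lemma k_diff_on: "M \<subseteq> {\<gamma><..} \<Longrightarrow> (\<lambda>y. \<sigma> * sqrt (y - \<gamma>) - \<beta>) differentiable_on M"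
  unfolding differentiable_on_def
proof
  fix y assume "M \<subseteq> {\<gamma><..}" "y \<in> M" then have "y > \<gamma>" by auto
  then have "((\<lambda>y. \<sigma> * sqrt (y - \<gamma>) - \<beta>) has_real_derivative (\<sigma> * (inverse (sqrt (y - \<gamma>)) / 2))) (at y within M)"
    by (auto intro!: derivative_eq_intros)
  then show "(\<lambda>y. \<sigma> * sqrt (y - \<gamma>) - \<beta>) differentiable (at y within M)"
    by (rule diffI)
qed

lemma h_diff_on: "(\<lambda>t::real. (t+\<beta>)^2 + \<gamma>) differentiable_on M"
  unfolding differentiable_on_def
proof
  fix y assume "y \<in> M"
  have "((\<lambda>t::real. (t+\<beta>)^2 + \<gamma>) has_real_derivative (2*(y+\<beta>))) (at y within M)"
    by (auto intro!: derivative_eq_intros)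
  then show "(\<lambda>t::real. (t+\<beta>)^2 + \<gamma>) differentiable (at y within M)"
    by (rule diffI)
qed

lemma trans_diff_on: "(\<lambda>t::real. c + t) differentiable_on M"
  unfolding differentiable_on_def
proof
  fix y assume "y \<in> M"
  have "((\<lambda>t::real. c + t) has_real_derivative 1) (at y within M)"
    by (auto intro!: derivative_eq_intros)
  then show "(\<lambda>t::real. c + t) differentiable (at y within M)"
    by (rule diffI)
qed

lemma negl_image:
  fixes f :: "real \<Rightarrow> real"
  assumes "negligible N" "f differentiable_on N"
  shows "negligible (f ` N)"
  using negligible_differentiable_image_negligible[of N f] assms by simp

lemma borel_not_negl:
  assumes "B \<in> sets borel" "emeasure lborel B > 0"
  shows "\<not> negligible B"
proof
  assume "negligible B"
  then have "B \<in> null_sets lebesgue" by (simp add: negligible_iff_null_sets)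
  then have "B \<in> null_sets lborel" using null_sets_completion_iff[of B lborel] assms(1) by simp
  then show False using assms(2) by (simp add: null_setsD1)
qed

lemma borel_lebesgue: "B \<in> sets borel \<Longrightarrow> B \<in> sets lebesgue"
  by (rule sets_completionI_sets) simp

definition goodX :: "real set \<Rightarrow> bool" where
  "goodX X \<longleftrightarrow> (\<forall>N. negligible N \<longrightarrow> countable (X \<inter> N)) \<and>
     (\<forall>B\<in>sets borel. emeasure lborel B > 0 \<longrightarrow> uncountable (X \<inter> B)) \<and>
     (\<forall>c. (UNIV::real set) \<lesssim> X \<inter> {c..})"

lemma good_exists:
  assumes "sierpinski S"
  shows "\<exists>X. goodX X"
proof -
  from assms have SU: "S \<approx> (UNIV::real set)"
    and SN: "\<And>N. negligible N \<Longrightarrow> countable (S \<inter> N)"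
    unfolding sierpinski_def by (auto simp: negligible_iff_null_sets)
  define X where "X = (\<Union>q\<in>\<rat>. (\<lambda>s. q + exp s) ` S)"
  have nullX: "countable (X \<inter> N)" if N: "negligible N" for N
  proof -
    have "X \<inter> N \<subseteq> (\<Union>q\<in>\<rat>. (\<lambda>s. q + exp s) ` (S \<inter> ln ` ((\<lambda>t. (-q) + t) ` N \<inter> {0<..})))"
    proof
      fix z assume "z \<in> X \<inter> N"
      then obtain q s where q: "q \<in> \<rat>" "s \<in> S" "z = q + exp s" "z \<in> N" unfolding X_def by auto
      have "exp s \<in> (\<lambda>t. (-q) + t) ` N" using q by (intro image_eqI[of _ _ z]) auto
      then have "exp s \<in> (\<lambda>t. (-q) + t) ` N \<inter> {0<..}" by simp
      then have "s \<in> ln ` ((\<lambda>t. (-q) + t) ` N \<inter> {0<..})" by (intro image_eqI[of _ _ "exp s"]) auto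
      then show "z \<in> (\<Union>q\<in>\<rat>. (\<lambda>s. q + exp s) ` (S \<inter> ln ` ((\<lambda>t. (-q) + t) ` N \<inter> {0<..})))"
        using q by blast
    qed
    moreover have "countable (\<Union>q\<in>\<rat>. (\<lambda>s. q + exp s) ` (S \<inter> ln ` ((\<lambda>t. (-q) + t) ` N \<inter> {0<..})))"
    proof (rule countable_UN[OF countable_rat])
      fix q :: real
      have "negligible ((\<lambda>t. (-q) + t) ` N)" by (rule negl_image[OF N trans_diff_on])
      then have "negligible ((\<lambda>t. (-q) + t) ` N \<inter> {0<..})" by (rule negligible_subset) auto
      then have "negligible (ln ` ((\<lambda>t. (-q) + t) ` N \<inter> {0<..}))" by (rule negl_image) (rule ln_diff_on, auto)
      then show "countable ((\<lambda>s. q + exp s) ` (S \<inter> ln ` ((\<lambda>t. (-q) + t) ` N \<inter> {0<..})))"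
        by (intro countable_image SN)
    qed
    ultimately show ?thesis by (rule countable_subset)
  qed
  have S2X: "exp ` S \<subseteq> X" unfolding X_def
    by (auto intro!: bexI[of _ 0])
  have uncS2: "uncountable (exp ` S)"
  proof
    assume "countable (exp ` S)"
    then have "countable S" by (rule countable_image_inj_on) (simp add: inj_on_def)
    moreover obtain f where "bij_betw f S (UNIV::real set)" using SU unfolding eqpoll_def by blast
    ultimately have "countable (UNIV::real set)" by (metis bij_betw_imp_surj_on countable_image)
    then show False using uncountable_UNIV_real by blast
  qed
  have uncX: "uncountable (X \<inter> B)" if B: "B \<in> sets borel" "emeasure lborel B > 0" for B
  proof
    assume cXB: "countable (X \<inter> B)"
    define C where "C = {x::real. \<exists>q\<in>\<rat>. x + q \<in> B}"
    have Cb: "C \<in> sets borel"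
    proof -
      note [measurable] = B(1)
      have "C = (\<Union>q\<in>\<rat>. {y. y + q \<in> B})" by (auto simp: C_def)
      also have "\<dots> \<in> sets borel" by (intro sets.countable_UN'' countable_rat) measurable
      finally show ?thesis .
    qed
    have Cinv: "x + q \<in> C" if qQ: "q \<in> \<rat>" and xC: "x \<in> C" for x q
    proof -
      obtain q' where q': "q' \<in> \<rat>" "x + q' \<in> B" using xC unfolding C_def by blast
      have "(x + q) + (q' - q) \<in> B" using q' by simp
      moreover have "q' - q \<in> \<rat>" using q' qQ by (simp add: Rats_diff)
      ultimately show ?thesis unfolding C_def by blast
    qed
    have BC: "B \<subseteq> C" unfolding C_def by (auto intro!: bexI[of _ 0])
    have "\<not> negligible C"
      using borel_not_negl[OF B] BC negligible_subset by blast
    then have negc: "negligible (-C)" using ergodic[OF borel_lebesgue[OF Cb]] Cinv by blast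
    have c1: "countable (exp ` S \<inter> -C)"
      by (rule countable_subset[OF _ nullX[OF negc]]) (use S2X in auto)
    have "\<exists>q\<in>\<rat>. uncountable (exp ` S \<inter> {x. x + q \<in> B})"
    proof (rule ccontr)
      assume "\<not> ?thesis"
      then have "countable (\<Union>q\<in>\<rat>. exp ` S \<inter> {x. x + q \<in> B})"
        by (intro countable_UN[OF countable_rat]) blast
      moreover have "exp ` S \<inter> C \<subseteq> (\<Union>q\<in>\<rat>. exp ` S \<inter> {x. x + q \<in> B})"
        by (auto simp: C_def)
      ultimately have "countable (exp ` S \<inter> C)" by (rule countable_subset[rotated])
      then have "countable ((exp ` S \<inter> C) \<union> (exp ` S \<inter> -C))" using c1 by simp
      moreover have "(exp ` S \<inter> C) \<union> (exp ` S \<inter> -C) = exp ` S" by blast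
      ultimately show False using uncS2 by simp
    qed
    then obtain q where q: "q \<in> \<rat>" "uncountable (exp ` S \<inter> {x. x + q \<in> B})" by blast
    have "(\<lambda>x. q + x) ` (exp ` S \<inter> {x. x + q \<in> B}) \<subseteq> X \<inter> B"
      using q(1) by (auto simp: X_def add.commute)
    then have "countable ((\<lambda>x. q + x) ` (exp ` S \<inter> {x. x + q \<in> B}))"
      using cXB by (rule countable_subset)
    then have "countable (exp ` S \<inter> {x. x + q \<in> B})"
      by (rule countable_image_inj_on) (simp add: inj_on_def)
    then show False using q(2) by blast
  qed
  have lepX: "(UNIV::real set) \<lesssim> X \<inter> {c..}" for c
  proof -
    define q where "q = real_of_int \<lceil>c\<rceil>"
    have q: "q \<in> \<rat>" "c \<le> q" unfolding q_def by (auto simp: le_of_int_ceiling)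
    have "S \<lesssim> X \<inter> {c..}" unfolding lepoll_def
    proof (intro exI conjI)
      show "inj_on (\<lambda>s. q + exp s) S" by (simp add: inj_on_def)
      show "(\<lambda>s. q + exp s) ` S \<subseteq> X \<inter> {c..}"
        using q by (auto simp: X_def) (smt (verit) exp_gt_zero)
    qed
    then show ?thesis using eqpoll_imp_lepoll[OF eqpoll_sym[OF SU]] lepoll_trans by blast
  qed
  show ?thesis unfolding goodX_def using nullX uncX lepX by blast
qed

lemma core:
  fixes \<beta> \<gamma> :: real
  assumes G: "goodX X"
  shows "strong_sierpinski {t. (t+\<beta>)^2 + \<gamma> \<in> X}"
proof -
  from G have XN: "\<And>N. negligible N \<Longrightarrow> countable (X \<inter> N)"
    and XB: "\<And>B. B \<in> sets borel \<Longrightarrow> emeasure lborel B > 0 \<Longrightarrow> uncountable (X \<inter> B)"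
    and XL: "\<And>c. (UNIV::real set) \<lesssim> X \<inter> {c..}" unfolding goodX_def by auto
  define h where "h t = (t+\<beta>)^2 + \<gamma>" for t
  define k where "k \<sigma> y = \<sigma> * sqrt (y - \<gamma>) - \<beta>" for \<sigma> y :: real
  define W where "W = {t. (t+\<beta>)^2 + \<gamma> \<in> X}"
  have W: "W = {t. h t \<in> X}" by (simp add: W_def h_def)
  have hk: "k \<sigma> (h t) = t" if "\<sigma> = 1 \<or> \<sigma> = -1" "\<sigma> * (t+\<beta>) \<ge> 0" for \<sigma> t
  proof -
    have "sqrt (h t - \<gamma>) = \<bar>t+\<beta>\<bar>" by (simp add: h_def)
    then show ?thesis using that by (auto simp: k_def abs_if)
  qed
  have kh: "h (k \<sigma> y) = y" if "\<sigma> = 1 \<or> \<sigma> = -1" "\<gamma> \<le> y" for \<sigma> y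
    using that by (auto simp: h_def k_def power_mult_distrib)
  have kinj: "inj_on (k \<sigma>) {\<gamma>..}" if "\<sigma> = 1 \<or> \<sigma> = -1" for \<sigma>
  proof (rule inj_onI)
    fix y1 y2 assume y: "y1 \<in> {\<gamma>..}" "y2 \<in> {\<gamma>..}" "k \<sigma> y1 = k \<sigma> y2"
    have "y1 = h (k \<sigma> y1)" using kh[OF that] y(1) by simp
    also have "\<dots> = h (k \<sigma> y2)" using y by simp
    also have "\<dots> = y2" using kh[OF that] y(2) by simp
    finally show "y1 = y2" .
  qed
  have card: "W \<approx> (UNIV::real set)"
  proof (rule lepoll_antisym)
    show "W \<lesssim> (UNIV::real set)" by (rule subset_imp_lepoll) simp
    have "X \<inter> {\<gamma>..} \<lesssim> W" unfolding lepoll_def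
    proof (intro exI conjI)
      show "inj_on (k 1) (X \<inter> {\<gamma>..})" using kinj[of 1] by (auto intro: inj_on_subset)
      show "k 1 ` (X \<inter> {\<gamma>..}) \<subseteq> W" unfolding W using kh[of 1] by auto
    qed
    then show "(UNIV::real set) \<lesssim> W" using XL[of \<gamma>] lepoll_trans by blast
  qed
  have null: "countable (W \<inter> N)" if N: "negligible N" for N
  proof -
    have hN: "negligible (h ` N)" unfolding h_def by (rule negl_image[OF N h_diff_on])
    have "W \<inter> N \<subseteq> k 1 ` (X \<inter> h ` N) \<union> k (-1) ` (X \<inter> h ` N)"
    proof
      fix t assume t: "t \<in> W \<inter> N"
      then have y: "h t \<in> X \<inter> h ` N" unfolding W by auto
      show "t \<in> k 1 ` (X \<inter> h ` N) \<union> k (-1) ` (X \<inter> h ` N)"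
      proof (cases "t + \<beta> \<ge> 0")
        case True
        then have "t = k 1 (h t)" using hk[of 1 t] by simp
        then show ?thesis using y by blast
      next
        case False
        then have "t = k (-1) (h t)" using hk[of "-1" t] by simp
        then show ?thesis using y by blast
      qed
    qed
    moreover have "countable (k 1 ` (X \<inter> h ` N) \<union> k (-1) ` (X \<inter> h ` N))"
      using XN[OF hN] by simp
    ultimately show ?thesis by (rule countable_subset)
  qed
  have pos: "uncountable (W \<inter> B)" if B: "B \<in> sets borel" "emeasure lborel B > 0" for B
  proof -
    have "\<exists>\<sigma>. (\<sigma> = 1 \<or> \<sigma> = -1) \<and> \<not> negligible (B \<inter> {t. \<sigma> * (t+\<beta>) > 0})"
    proof (rule ccontr)
      assume "\<not> ?thesis"
      then have n1: "negligible (B \<inter> {t. 1 * (t+\<beta>) > 0})"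
        and n2: "negligible (B \<inter> {t. (-1) * (t+\<beta>) > 0})" by blast+
      have "B \<subseteq> (B \<inter> {t. 1 * (t+\<beta>) > 0}) \<union> (B \<inter> {t. (-1) * (t+\<beta>) > 0}) \<union> {-\<beta>}"
        by auto
      moreover have "negligible ((B \<inter> {t. 1 * (t+\<beta>) > 0}) \<union> (B \<inter> {t. (-1) * (t+\<beta>) > 0}) \<union> {-\<beta>})"
        using n1 n2 by (intro negligible_Un) auto
      ultimately have "negligible B" by (rule negligible_subset[rotated])
      then show False using borel_not_negl[OF B] by blast
    qed
    then obtain \<sigma> where \<sigma>: "\<sigma> = 1 \<or> \<sigma> = -1" and nBs: "\<not> negligible (B \<inter> {t. \<sigma> * (t+\<beta>) > 0})"
      by blast
    define Bs where "Bs = B \<inter> {t. \<sigma> * (t+\<beta>) > 0}"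
    define E where "E = {y. \<gamma> < y \<and> k \<sigma> y \<in> Bs}"
    have Bsb: "Bs \<in> sets borel" unfolding Bs_def using B(1) by measurable
    have Eb: "E \<in> sets borel"
    proof -
      note [measurable] = Bsb
      have [measurable]: "k \<sigma> \<in> borel_measurable borel" unfolding k_def
        by (intro borel_measurable_continuous_onI continuous_intros)
      show ?thesis unfolding E_def by measurable
    qed
    have Epos: "emeasure lborel E > 0"
    proof (rule ccontr)
      assume "\<not> emeasure lborel E > 0"
      then have "emeasure lborel E = 0" by (simp add: not_gr_zero)
      then have "E \<in> null_sets lborel" using Eb by (simp add: null_setsI)
      then have "negligible E" by (simp add: negligible_iff_null_sets null_sets_completionI)
      then have nk: "negligible (k \<sigma> ` E)" unfolding k_def
        by (rule negl_image) (rule k_diff_on, auto simp: E_def)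
      have "Bs \<subseteq> k \<sigma> ` E"
      proof
        fix t assume t: "t \<in> Bs"
        then have tb: "\<sigma> * (t+\<beta>) > 0" unfolding Bs_def by auto
        then have "t + \<beta> \<noteq> 0" by auto
        then have "h t > \<gamma>" unfolding h_def by simp
        moreover have "k \<sigma> (h t) = t" using hk[OF \<sigma>] tb by simp
        ultimately show "t \<in> k \<sigma> ` E" using t unfolding E_def by (auto intro!: image_eqI[of _ _ "h t"])
      qed
      then have "negligible Bs" using nk negligible_subset by blast
      then show False using nBs unfolding Bs_def by blast
    qed
    have uE: "uncountable (X \<inter> E)" by (rule XB[OF Eb Epos])
    have sub: "k \<sigma> ` (X \<inter> E) \<subseteq> W \<inter> B"
    proof
      fix t assume "t \<in> k \<sigma> ` (X \<inter> E)"
      then obtain y where y: "y \<in> X" "y \<in> E" "t = k \<sigma> y" by blast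
      then have "t \<in> B" unfolding E_def Bs_def by auto
      moreover have "h t = y" using y kh[OF \<sigma>, of y] unfolding E_def by auto
      ultimately show "t \<in> W \<inter> B" using y unfolding W by auto
    qed
    have inj: "inj_on (k \<sigma>) (X \<inter> E)"
      by (rule inj_on_subset[OF kinj[OF \<sigma>]]) (auto simp: E_def)
    show ?thesis
    proof
      assume "countable (W \<inter> B)"
      then have "countable (k \<sigma> ` (X \<inter> E))" using sub by (rule countable_subset[rotated])
      then have "countable (X \<inter> E)" using inj by (rule countable_image_inj_on)
      then show False using uE by blast
    qed
  qed
  show ?thesis unfolding W_def[symmetric] strong_sierpinski_def sierpinski_def
    using card null pos by (auto simp: negligible_iff_null_sets)
qed

lemma isometry_affine:
  fixes T :: "real \<Rightarrow> real^2"
  assumes iso: "\<And>x y. dist (T x) (T y) = dist x y"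
  shows "T t = T 0 + t *\<^sub>R (T 1 - T 0)" and "norm (T 1 - T 0) = 1"
proof -
  define w where "w = T 1 - T 0"
  define u where "u = T t - T 0"
  have nw: "norm w = 1" using iso[of 1 0] by (simp add: w_def dist_norm)
  have nu: "norm u = \<bar>t\<bar>" using iso[of t 0] by (simp add: u_def dist_norm)
  have nuw: "norm (u - w) = \<bar>t - 1\<bar>" using iso[of t 1] by (simp add: u_def w_def dist_norm)
  have e1: "(norm (u - w))^2 = (norm u)^2 - 2 * (u \<bullet> w) + (norm w)^2"
    by (simp add: power2_norm_eq_inner inner_diff_left inner_diff_right inner_commute)
  have "(t - 1)^2 = t^2 - 2 * (u \<bullet> w) + 1" using e1 nu nuw nw by simp
  then have uw: "u \<bullet> w = t" by (simp add: power2_eq_square algebra_simps)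
  have "(norm (u - t *\<^sub>R w))^2 = (norm u)^2 - 2 * t * (u \<bullet> w) + t^2 * (norm w)^2"
    by (simp only: power2_norm_eq_inner) (simp add: inner_diff_left inner_diff_right inner_commute algebra_simps power2_eq_square)
  also have "\<dots> = 0" using nu nw uw by (simp add: power2_eq_square)
  finally have "u = t *\<^sub>R w" by simp
  then show "T t = T 0 + t *\<^sub>R (T 1 - T 0)" by (simp add: u_def w_def algebra_simps)
  show "norm (T 1 - T 0) = 1" using nw w_def by simp
qed

lemma norm_line_sq:
  fixes a w :: "real^2"
  assumes "norm w = 1"
  shows "(norm (a + t *\<^sub>R w))^2 = (t + a \<bullet> w)^2 + ((norm a)^2 - (a \<bullet> w)^2)"
proof -
  have "(norm (a + t *\<^sub>R w))^2 = (norm a)^2 + 2*t*(a \<bullet> w) + t^2 * (norm w)^2"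
    by (simp only: power2_norm_eq_inner) (simp add: inner_add_left inner_add_right inner_commute algebra_simps power2_eq_square)
  then show ?thesis using assms by (simp add: power2_eq_square algebra_simps)
qed

theorem mainTheorem10:
  assumes "\<exists>S :: real set. sierpinski S"
  shows "\<exists>A :: (real^2) set. \<forall>l T. is_line l \<and> (\<forall>x y. dist (T x) (T y) = dist x y) \<and> range T = l
           \<longrightarrow> strong_sierpinski (T -` (A \<inter> l))"
proof -
  obtain S where "sierpinski S" using assms by blast
  then obtain X where G: "goodX X" using good_exists by blast
  define A where "A = {p::real^2. (norm p)^2 \<in> X}"
  show ?thesis
  proof (rule exI[of _ A], intro allI impI)
    fix l and T :: "real \<Rightarrow> real^2"
    assume H: "is_line l \<and> (\<forall>x y. dist (T x) (T y) = dist x y) \<and> range T = l"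
    then have iso: "\<And>x y. dist (T x) (T y) = dist x y" and rl: "range T = l" by auto
    define a where "a = T 0"
    define w where "w = T 1 - T 0"
    have Tt: "T t = a + t *\<^sub>R w" for t using isometry_affine(1)[OF iso, of t] by (simp add: a_def w_def)
    have nw: "norm w = 1" using isometry_affine(2)[OF iso] by (simp add: w_def)
    have "T -` (A \<inter> l) = {t. (norm (T t))^2 \<in> X}" using rl by (auto simp: A_def)
    also have "\<dots> = {t. (t + a \<bullet> w)^2 + ((norm a)^2 - (a \<bullet> w)^2) \<in> X}"
      by (simp add: Tt norm_line_sq[OF nw])
    finally show "strong_sierpinski (T -` (A \<inter> l))" using core[OF G] by simp
  qed
qed

end
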